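(* Let $p\in(0,1/2)$ and $x>2$. Let $(\xi_n)_{n\geq1}$ be i.i.d. with $\mathbf{P}(\xi_1=1)=p=1-\mathbf{P}(\xi_1=-1)$. Set $W_0:=x$, $B_1:=1$, $W_n:=W_{n-1}+\xi_nB_n$, $B_{n+1}:=B_n2^{\xi_n}$ for $n\geq1$, and $X_n:=W_n/B_{n+1}-2$ for $n\in\mathbb{N}$. Let $R:=\max\{2,\ \frac{2p}{(1-2p)\log2}+1\}$ and, for $k\geq1$, $T_k:=\#\{1\leq j\leq k: X_j\geq R\}$. There exist positive constants $C$ and $\beta$, independent of $x$, $p$ and $k$, such that for all $k\geq1$, $$\mathbf{P}\left(X_k>0,\ T_k\leq\tfrac{3k}{4}\right)\leq C\left(2^{-\beta p^2k}+2^{\frac{\beta(1-2p)}{\log_2(1-2p)}k}\right).$$ *)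

theory Defs
  imports "HOL-Probability.Probability"
begin

definition xi_dist :: "real \<Rightarrow> real measure" where
  "xi_dist p = measure_pmf (map_pmf (\<lambda>b. if b then 1 else -1) (bernoulli_pmf p))"

text \<open>Canonical probability space of an i.i.d. sequence: the outcome is
  \<omega> :: nat \<Rightarrow> real with \<xi>_n = \<omega> n (for n \<ge> 1; the coordinate 0 is unused).\<close>
definition Omega :: "real \<Rightarrow> (nat \<Rightarrow> real) measure" where
  "Omega p = PiM UNIV (\<lambda>_::nat. xi_dist p)"

text \<open>B_1 = 1, B_{n+1} = B_n 2^{\<xi>_n} for n \<ge> 1 (B_0 is an unused placeholder).\<close>
fun Bn :: "(nat \<Rightarrow> real) \<Rightarrow> nat \<Rightarrow> real" where
  "Bn \<omega> 0 = 1"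
| "Bn \<omega> (Suc n) = (if n = 0 then 1 else Bn \<omega> n * 2 powr (\<omega> n))"

primrec Wn :: "real \<Rightarrow> (nat \<Rightarrow> real) \<Rightarrow> nat \<Rightarrow> real" where
  "Wn x \<omega> 0 = x"
| "Wn x \<omega> (Suc n) = Wn x \<omega> n + \<omega> (Suc n) * Bn \<omega> (Suc n)"

definition Xn :: "real \<Rightarrow> (nat \<Rightarrow> real) \<Rightarrow> nat \<Rightarrow> real" where
  "Xn x \<omega> n = Wn x \<omega> n / Bn \<omega> (Suc n) - 2"

definition Rconst :: "real \<Rightarrow> real" where
  "Rconst p = max 2 (2 * p / ((1 - 2 * p) * ln 2) + 1)"

definition Tk :: "real \<Rightarrow> real \<Rightarrow> (nat \<Rightarrow> real) \<Rightarrow> nat \<Rightarrow> nat" where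
  "Tk p x \<omega> k = card {j \<in> {1..k}. Xn x \<omega> j \<ge> Rconst p}"

end

theory Submission
  imports Defs
begin

definition G :: "real \<Rightarrow> real \<Rightarrow> real" where "G y s = (y + 2 + s) / 2 powr s - 2"
primrec Z :: "real \<Rightarrow> (nat \<Rightarrow> real) \<Rightarrow> nat \<Rightarrow> real" where
  "Z y \<omega> 0 = y" | "Z y \<omega> (Suc n) = G (Z y \<omega> n) (\<omega> n)"

lemma space_xi[simp]: "space (xi_dist p) = UNIV" by (simp add: xi_dist_def)
lemma sets_xi[simp]: "sets (xi_dist p) = UNIV" by (simp add: xi_dist_def)
lemma prob_xi: "prob_space (xi_dist p)" unfolding xi_dist_def by (rule prob_space_measure_pmf)
lemma space_Omega[simp]: "space (Omega p) = UNIV" by (simp add: Omega_def space_PiM)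

lemma G_meas[measurable]: assumes [measurable]: "f \<in> borel_measurable M" "g \<in> borel_measurable M"
  shows "(\<lambda>x. G (f x) (g x)) \<in> borel_measurable M"
  unfolding G_def by measurable

lemma Z_meas[measurable]: "(\<lambda>\<omega>. Z y \<omega> n) \<in> borel_measurable (Omega p)"
proof (induction n)
  case 0 then show ?case by simp
next
  case (Suc n)
  have *: "(\<lambda>\<omega>. \<omega> n) \<in> borel_measurable (Omega p)"
    unfolding Omega_def
    by (rule measurable_compose[OF measurable_component_singleton]) (auto simp: xi_dist_def)
  show ?case unfolding Z.simps by (rule G_meas[OF Suc *])
qed



lemma iter:
  assumes X: "X \<in> sets (Omega p)"
  shows "emeasure (Omega p) X = (\<integral>\<^sup>+ s. emeasure (Omega p) {\<omega>. case_nat s \<omega> \<in> X} \<partial>(xi_dist p))"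
proof -
  interpret sequence_space "xi_dist p"
    by (simp add: sequence_space_def product_prob_space_def product_prob_space_axioms_def product_sigma_finite_def prob_xi prob_space_imp_sigma_finite)
  have OS: "Omega p = S" by (simp add: Omega_def)
  have f: "(\<lambda>(s, \<omega>). case_nat s \<omega>) \<in> measurable (xi_dist p \<Otimes>\<^sub>M S) S"
    by measurable
  have XS: "X \<in> sets S" using X OS by simp
  have "emeasure S X = emeasure (distr (xi_dist p \<Otimes>\<^sub>M S) S (\<lambda>(s, \<omega>). case_nat s \<omega>)) X"
    by (simp add: PiM_iter)
  also have "\<dots> = emeasure (xi_dist p \<Otimes>\<^sub>M S) ((\<lambda>(s, \<omega>). case_nat s \<omega>) -` X \<inter> space (xi_dist p \<Otimes>\<^sub>M S))"
    by (rule emeasure_distr[OF f XS])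
  also have "\<dots> = (\<integral>\<^sup>+ s. emeasure S (Pair s -` ((\<lambda>(s, \<omega>). case_nat s \<omega>) -` X \<inter> space (xi_dist p \<Otimes>\<^sub>M S))) \<partial>(xi_dist p))"
    by (rule P.emeasure_pair_measure_alt) (rule measurable_sets[OF f XS])
  also have "\<dots> = (\<integral>\<^sup>+ s. emeasure S {\<omega>. case_nat s \<omega> \<in> X} \<partial>(xi_dist p))"
    by (intro nn_integral_cong arg_cong2[where f=emeasure]) (auto simp: space_pair_measure OS[symmetric])
  finally show ?thesis using OS by simp
qed



lemma nn_integral_xi:
  assumes "0 \<le> p" "p \<le> 1"
  shows "(\<integral>\<^sup>+ s. F s \<partial>(xi_dist p)) = F 1 * ennreal p + F (-1) * ennreal (1 - p)"
  unfolding xi_dist_def using assms by (simp add: nn_integral_bernoulli_pmf)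

lemma G_up[simp]: "G y (-1) = 2 * y" by (simp add: G_def powr_minus divide_simps)
lemma G_dn[simp]: "G y 1 = (y - 1) / 2" by (simp add: G_def divide_simps)

lemma Z_shift: "Z y (case_nat s \<omega>) (Suc n) = Z (G y s) \<omega> n"
  by (induction n) auto

definition cnt :: "real \<Rightarrow> real \<Rightarrow> (nat \<Rightarrow> real) \<Rightarrow> nat \<Rightarrow> real" where
  "cnt R y \<omega> n = (\<Sum>j<n. if Z y \<omega> j < R then 1 else 0)"

lemma cnt_shift: "cnt R y (case_nat s \<omega>) (Suc n) = (if y < R then 1 else 0) + cnt R (G y s) \<omega> n"
  unfolding cnt_def by (subst sum.lessThan_Suc_shift) (simp add: Z_shift del: Z.simps(2))

lemma cnt_meas[measurable]: "(\<lambda>\<omega>. cnt R y \<omega> n) \<in> borel_measurable (Omega p)"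
  unfolding cnt_def by measurable

fun hH :: "real \<Rightarrow> real \<Rightarrow> nat \<Rightarrow> nat \<Rightarrow> real" where
  "hH c u m 0 = 0"
| "hH c u m (Suc j) = (if j < m then hH c u m j + c * u ^ (m - Suc j) else hH c u m j)"

lemma hH_nonneg: "c \<ge> 0 \<Longrightarrow> u \<ge> 0 \<Longrightarrow> hH c u m j \<ge> 0"
  by (induction j) auto

lemma hH_mono_Suc: "c \<ge> 0 \<Longrightarrow> u \<ge> 0 \<Longrightarrow> hH c u m j \<le> hH c u m (Suc j)"
  by auto

lemma hH_mono: assumes "c \<ge> 0" "u \<ge> 0" "j \<le> j'" shows "hH c u m j \<le> hH c u m j'"
  using assms(3) assms(1,2) by (induction j' rule: dec_induct) (auto intro: order_trans hH_mono_Suc)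

lemma hH_top: assumes "m \<le> j" shows "hH c u m j = hH c u m m"
  using assms by (induction j rule: dec_induct) auto



lemma hH_ineq:
  assumes p: "0 < p" "p < 1" and cp: "c * p \<ge> 1" and cu: "c * (p * u - (1 - p)) \<ge> 1" and u: "u \<ge> 1"
    and j: "j \<ge> 1"
  shows "(if j \<le> m then 1 else 0) + (1 - p) * hH c u m (Suc j) + p * hH c u m (j - 1) \<le> hH c u m j"
proof -
  consider "m < j" | "j = m" | "j < m" by linarith
  then show ?thesis
  proof cases
    case 1
    have a: "hH c u m j = hH c u m m" by (rule hH_top) (use 1 in simp)
    have b: "hH c u m (Suc j) = hH c u m m" by (rule hH_top) (use 1 in simp)
    have d: "hH c u m (j - 1) = hH c u m m" by (rule hH_top) (use 1 in simp)
    have "(1 - p) * hH c u m m + p * hH c u m m = hH c u m m" by (simp add: algebra_simps)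
    then show ?thesis using 1 a b d by simp
  next
    case 2
    then obtain i where i: "m = Suc i" using j by (cases m) auto
    have "hH c u m (Suc j) = hH c u m j" using 2 hH_top[of m "Suc j" c u] by simp
    moreover have "hH c u m j = hH c u m (j - 1) + c" using 2 i by simp
    ultimately show ?thesis using 2 cp by (simp add: algebra_simps)
  next
    case 3
    then obtain i where i: "j = Suc i" using j by (cases j) auto
    define w where "w = u ^ (m - Suc j)"
    have w1: "w \<ge> 1" unfolding w_def using u by simp
    have uw: "u ^ (m - j) = u * w" unfolding w_def using 3
      by (metis Suc_diff_Suc power_Suc)
    have e1: "hH c u m (Suc j) = hH c u m j + c * w" using 3 by (simp add: w_def)
    have e2: "hH c u m j = hH c u m (j - 1) + c * (u * w)" using 3 i uw by simp
    have "1 * 1 \<le> w * (c * (p * u - (1 - p)))"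
      by (rule mult_mono[OF w1 cu]) (use w1 in auto)
    then have key: "1 + (1 - p) * (hH c u m j + c * w) + p * (hH c u m j - c * (u * w)) \<le> hH c u m j"
      by (simp add: algebra_simps)
    have e3: "hH c u m (j - 1) = hH c u m j - c * (u * w)" using e2 by simp
    show ?thesis using 3 key unfolding e1 e3 by simp
  qed
qed


definition ee :: "real \<Rightarrow> nat" where "ee z = nat \<lceil>log 2 (z + 1)\<rceil>"

lemma ee_pos: assumes "z > 0" shows "ee z \<ge> 1"
proof -
  have "log 2 (z + 1) > 0" using assms by simp
  then have "0 < \<lceil>log 2 (z + 1)\<rceil>" by simp
  then show ?thesis unfolding ee_def by linarith
qed

lemma ee_le1: assumes "0 < z" "z \<le> 1" shows "ee z = 1"
proof -
  have "log 2 (z + 1) \<le> 1" using assms by (simp add: log_le_one_cancel_iff)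
  moreover have "log 2 (z + 1) > 0" using assms by simp
  ultimately have "\<lceil>log 2 (z + 1)\<rceil> = 1" by (simp add: ceiling_eq_iff)
  then show ?thesis unfolding ee_def by simp
qed

lemma ee_dn: assumes "z > 1" shows "ee ((z - 1) / 2) = ee z - 1"
proof -
  have "log 2 ((z - 1) / 2 + 1) = log 2 ((z + 1) / 2)" by (simp add: field_simps)
  also have "\<dots> = log 2 (z + 1) - 1" using assms by (simp add: log_divide)
  finally have "\<lceil>log 2 ((z - 1) / 2 + 1)\<rceil> = \<lceil>log 2 (z + 1)\<rceil> - 1" by simp
  then show ?thesis unfolding ee_def by (simp add: nat_diff_distrib)
qed

lemma ee_up: assumes "z > 0" shows "ee (2 * z) \<le> Suc (ee z)"
proof -
  have "log 2 (2 * z + 1) \<le> log 2 (2 * (z + 1))" using assms by simp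
  also have "\<dots> = log 2 2 + log 2 (z + 1)" using assms by (intro log_mult_pos) auto
  also have "\<dots> = 1 + log 2 (z + 1)" by simp
  finally have "\<lceil>log 2 (2 * z + 1)\<rceil> \<le> 1 + \<lceil>log 2 (z + 1)\<rceil>"
    by (metis ceiling_mono ceiling_add_one add.commute)
  moreover have "log 2 (z + 1) > 0" using assms by simp
  then have "\<lceil>log 2 (z + 1)\<rceil> \<ge> 0" by simp
  ultimately show ?thesis unfolding ee_def by linarith
qed

lemma ee_R: assumes "0 < z" "z < R" "R + 1 \<le> 2 ^ m" shows "ee z \<le> m"
proof -
  have "z + 1 \<le> 2 ^ m" using assms by simp
  then have "log 2 (z + 1) \<le> log 2 (2 ^ m)" using assms by (subst log_le_cancel_iff) auto
  also have "\<dots> = m" by (simp add: log_nat_power)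
  finally have "\<lceil>log 2 (z + 1)\<rceil> \<le> int m" by (simp add: ceiling_le_iff)
  then show ?thesis unfolding ee_def nat_le_iff .
qed

lemma H_ineq:
  assumes p: "0 < p" "p < 1" and cp: "c * p \<ge> 1" and cu: "c * (p * u - (1 - p)) \<ge> 1" and u: "u \<ge> 1"
    and z: "z > 0" and Rm: "R + 1 \<le> 2 ^ m"
  shows "(if z < R then 1 else 0) + (1 - p) * hH c u m (ee (2 * z))
     + p * (if (z - 1) / 2 > 0 then hH c u m (ee ((z - 1) / 2)) else 0) \<le> hH c u m (ee z)"
proof -
  have c0: "c \<ge> 0" using cp p by (metis less_numeral_extra(1) mult_le_0_iff not_le order.strict_trans1 less_imp_le)
  have u0: "u \<ge> 0" using u by simp
  define j where "j = ee z"
  have j1: "j \<ge> 1" using ee_pos[OF z] j_def by simp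
  have h1: "(if z < R then 1 else 0) \<le> (if j \<le> m then 1 else (0::real))"
    using ee_R[OF z _ Rm] j_def by auto
  have h2: "hH c u m (ee (2 * z)) \<le> hH c u m (Suc j)"
    using hH_mono[OF c0 u0 ee_up[OF z]] j_def by simp
  have h3: "(if (z - 1) / 2 > 0 then hH c u m (ee ((z - 1) / 2)) else 0) \<le> hH c u m (j - 1)"
  proof (cases "(z - 1) / 2 > 0")
    case True
    then have "z > 1" by simp
    then show ?thesis using ee_dn j_def True by simp
  next
    case False
    then show ?thesis using hH_nonneg[OF c0 u0] by simp
  qed
  have main: "(if j \<le> m then 1 else 0) + (1 - p) * hH c u m (Suc j) + p * hH c u m (j - 1) \<le> hH c u m j"
    by (rule hH_ineq[OF p cp cu u j1])
  have "(1 - p) * hH c u m (ee (2 * z)) \<le> (1 - p) * hH c u m (Suc j)"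
    using h2 p by (intro mult_left_mono) auto
  moreover have "p * (if (z - 1) / 2 > 0 then hH c u m (ee ((z - 1) / 2)) else 0) \<le> p * hH c u m (j - 1)"
    using h3 p by (intro mult_left_mono) auto
  ultimately show ?thesis using main h1 unfolding j_def by linarith
qed



lemma prob_Omega: "prob_space (Omega p)"
  unfolding Omega_def by (rule prob_space_PiM) (rule prob_xi)

lemma emeasure_UNIV_Omega[simp]: "emeasure (Omega p) UNIV = 1"
  using prob_space.emeasure_space_1[OF prob_Omega, of p] by simp

definition "Vv c u m = hH c u m m"
definition "Phi c u m z = (if 0 < z then (Vv c u m + hH c u m (ee z)) / Vv c u m else 0)"
definition "tt c u m = 1 / (4 * Vv c u m)"
definition "Bd c u m z r = Phi c u m z * exp (- tt c u m * r)"

locale params =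
  fixes p c u R :: real and m :: nat
  assumes p: "0 < p" "p < 1" and cp: "c * p \<ge> 1" and cu: "c * (p * u - (1 - p)) \<ge> 1"
    and u: "u \<ge> 1" and Rm: "R + 1 \<le> 2 ^ m" and m1: "m \<ge> 1"
begin

lemma c1: "c \<ge> 1"
proof -
  have "0 < c * p" using cp by linarith
  then have "0 < c" using p by (simp add: zero_less_mult_iff)
  then have "c * p \<le> c * 1" using p by (intro mult_left_mono) auto
  then show ?thesis using cp by simp
qed

lemma c0: "c \<ge> 0" using c1 by simp
lemma u0: "u \<ge> 0" using u by simp

lemma V1: "Vv c u m \<ge> 1"
proof -
  have "hH c u m 1 \<le> hH c u m m" by (rule hH_mono[OF c0 u0 m1])
  moreover have "hH c u m 1 = c * u ^ (m - 1)" using m1 by simp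
  moreover have "u ^ (m - 1) \<ge> 1" using u by simp
  moreover have "1 * 1 \<le> c * u ^ (m - 1)" using c1 u by (intro mult_mono) auto
  ultimately show ?thesis unfolding Vv_def by simp
qed

lemma H_le_V: "hH c u m j \<le> Vv c u m"
proof (cases "j \<le> m")
  case True then show ?thesis unfolding Vv_def by (rule hH_mono[OF c0 u0])
next
  case False then show ?thesis unfolding Vv_def using hH_top[of m j] by simp
qed

lemma Phi_nonneg: "Phi c u m z \<ge> 0"
  unfolding Phi_def using V1 hH_nonneg[OF c0 u0] by auto

lemma Phi_ge1: "z > 0 \<Longrightarrow> Phi c u m z \<ge> 1"
  unfolding Phi_def using V1 hH_nonneg[OF c0 u0] by auto

lemma Phi_le2: "Phi c u m z \<le> 2"
  unfolding Phi_def using V1 H_le_V by (auto simp: divide_simps)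

lemma Bd_nonneg: "Bd c u m z r \<ge> 0"
  unfolding Bd_def using Phi_nonneg by simp

lemma step_real:
  assumes y: "y > 0"
  shows "exp (tt c u m * (if y < R then 1 else 0)) * (p * Phi c u m ((y - 1) / 2) + (1 - p) * Phi c u m (2 * y))
         \<le> Phi c u m y"
proof -
  define V where "V = Vv c u m"
  define b :: real where "b = (if y < R then 1 else 0)"
  define Hd where "Hd = (if (y - 1) / 2 > 0 then hH c u m (ee ((y - 1) / 2)) else 0)"
  define W where "W = V + hH c u m (ee y)"
  have V1': "V \<ge> 1" using V1 V_def by simp
  have Hi: "b + (1 - p) * hH c u m (ee (2 * y)) + p * Hd \<le> hH c u m (ee y)"
    unfolding b_def Hd_def by (rule H_ineq[OF p cp cu u y Rm])
  have Pd: "Phi c u m ((y - 1) / 2) \<le> (V + Hd) / V"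
    unfolding Phi_def Hd_def V_def[symmetric] using V1' hH_nonneg[OF c0 u0]
    by (auto simp: divide_simps)
  have Pu: "Phi c u m (2 * y) = (V + hH c u m (ee (2 * y))) / V"
    unfolding Phi_def V_def using y by simp
  have Py: "Phi c u m y = W / V" unfolding Phi_def W_def V_def using y by simp
  have "p * Phi c u m ((y - 1) / 2) + (1 - p) * Phi c u m (2 * y)
      \<le> p * ((V + Hd) / V) + (1 - p) * ((V + hH c u m (ee (2 * y))) / V)"
    using Pd Pu p by (intro add_mono mult_left_mono) auto
  also have "\<dots> = (V + (p * Hd + (1 - p) * hH c u m (ee (2 * y)))) / V"
    using V1' by (simp add: field_simps)
  also have "\<dots> \<le> (W - b) / V"
    using Hi V1' unfolding W_def by (intro divide_right_mono) auto
  finally have S: "p * Phi c u m ((y - 1) / 2) + (1 - p) * Phi c u m (2 * y) \<le> (W - b) / V" .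
  have WV: "W \<le> 2 * V" unfolding W_def V_def using H_le_V by simp
  have W1: "W \<ge> 1" unfolding W_def using V1' hH_nonneg[OF c0 u0] by (smt (verit))
  have t: "tt c u m = 1 / (4 * V)" unfolding tt_def V_def by simp
  show ?thesis
  proof (cases "y < R")
    case False
    then show ?thesis using S Py unfolding b_def by simp
  next
    case True
    have t0: "0 \<le> 1 / (4 * V)" "1 / (4 * V) \<le> 1/2" using V1' by (auto simp: divide_simps)
    have e: "exp (1 / (4 * V)) \<le> 1 + 2 * (1 / (4 * V))" by (rule real_exp_bound_lemma[OF t0])
    have "exp (1 / (4 * V)) * ((W - 1) / V) \<le> (1 + 2 * (1 / (4 * V))) * ((W - 1) / V)"
      using e W1 V1' by (intro mult_right_mono) auto
    also have "\<dots> \<le> W / V"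
    proof -
      have q: "(W - 1) / (2 * V) \<le> 1" using WV V1' by (simp add: divide_simps)
      have "(1 + 2 * (1 / (4 * V))) * (W - 1) = W - 1 + (W - 1) / (2 * V)" using V1' by (simp add: field_simps)
      then have "(1 + 2 * (1 / (4 * V))) * (W - 1) \<le> W" using q by linarith
      then have "(1 + 2 * (1 / (4 * V))) * (W - 1) / V \<le> W / V" using V1' by (intro divide_right_mono) auto
      then show ?thesis by simp
    qed
    finally have "exp (1 / (4 * V)) * ((W - 1) / V) \<le> W / V" .
    moreover have "exp (1 / (4 * V)) * (p * Phi c u m ((y - 1) / 2) + (1 - p) * Phi c u m (2 * y))
        \<le> exp (1 / (4 * V)) * ((W - 1) / V)"
      using S True unfolding b_def by (intro mult_left_mono) auto
    ultimately show ?thesis using True Py t by simp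
  qed
qed

lemma Bd_step:
  "p * Bd c u m ((y - 1) / 2) (r - (if y < R then 1 else 0)) + (1 - p) * Bd c u m (2 * y) (r - (if y < R then 1 else 0))
     \<le> Bd c u m y r"
proof (cases "y > 0")
  case False
  then show ?thesis unfolding Bd_def Phi_def by auto
next
  case True
  define b :: real where "b = (if y < R then 1 else 0)"
  define t where "t = tt c u m"
  have ex: "exp (- t * (r - b)) = exp (- t * r) * exp (t * b)"
    by (simp add: algebra_simps flip: exp_add)
  have "p * Bd c u m ((y - 1) / 2) (r - b) + (1 - p) * Bd c u m (2 * y) (r - b)
      = exp (- t * r) * (exp (t * b) * (p * Phi c u m ((y - 1) / 2) + (1 - p) * Phi c u m (2 * y)))"
    unfolding Bd_def t_def[symmetric] ex by (simp add: algebra_simps)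
  also have "\<dots> \<le> exp (- t * r) * Phi c u m y"
    using step_real[OF True] unfolding b_def t_def by (intro mult_left_mono) auto
  finally show ?thesis unfolding b_def Bd_def t_def by (simp add: algebra_simps)
qed

lemma bound:
  "emeasure (Omega p) {\<omega>. 0 < Z y \<omega> n \<and> r \<le> cnt R y \<omega> n} \<le> ennreal (Bd c u m y r)"
proof (induction n arbitrary: y r)
  case 0
  show ?case
  proof (cases "0 < y \<and> r \<le> 0")
    case True
    then have "{\<omega>. 0 < Z y \<omega> 0 \<and> r \<le> cnt R y \<omega> 0} = UNIV" by (auto simp: cnt_def)
    moreover have "Bd c u m y r \<ge> 1"
    proof -
      have "r / (4 * Vv c u m) \<le> 0" using True V1 by (simp add: divide_nonpos_pos)
      then have "exp (- tt c u m * r) \<ge> 1" unfolding tt_def by simp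
      then have "1 * 1 \<le> Phi c u m y * exp (- tt c u m * r)"
        using Phi_ge1[of y] True by (intro mult_mono) auto
      then show ?thesis unfolding Bd_def by simp
    qed
    ultimately show ?thesis by simp
  next
    case False
    then have "{\<omega>. 0 < Z y \<omega> 0 \<and> r \<le> cnt R y \<omega> 0} = {}" by (auto simp: cnt_def)
    then show ?thesis by (metis emeasure_empty zero_le)
  qed
next
  case (Suc n)
  define b :: real where "b = (if y < R then 1 else 0)"
  define A where "A = {\<omega>. 0 < Z y \<omega> (Suc n) \<and> r \<le> cnt R y \<omega> (Suc n)}"
  have "Measurable.pred (Omega p) (\<lambda>\<omega>. 0 < Z y \<omega> (Suc n) \<and> r \<le> cnt R y \<omega> (Suc n))"
    by measurable
  then have Am: "A \<in> sets (Omega p)" unfolding A_def pred_def by simp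
  have sh: "{\<omega>. case_nat s \<omega> \<in> A} = {\<omega>. 0 < Z (G y s) \<omega> n \<and> r - b \<le> cnt R (G y s) \<omega> n}" for s
    unfolding A_def b_def by (auto simp: Z_shift cnt_shift simp del: Z.simps(2))
  have "emeasure (Omega p) A = (\<integral>\<^sup>+ s. emeasure (Omega p) {\<omega>. case_nat s \<omega> \<in> A} \<partial>(xi_dist p))"
    by (rule iter[OF Am])
  also have "\<dots> = emeasure (Omega p) {\<omega>. 0 < Z (G y 1) \<omega> n \<and> r - b \<le> cnt R (G y 1) \<omega> n} * ennreal p
      + emeasure (Omega p) {\<omega>. 0 < Z (G y (-1)) \<omega> n \<and> r - b \<le> cnt R (G y (-1)) \<omega> n} * ennreal (1 - p)"
    unfolding sh using p by (subst nn_integral_xi) auto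
  also have "\<dots> \<le> ennreal (Bd c u m (G y 1) (r - b)) * ennreal p + ennreal (Bd c u m (G y (-1)) (r - b)) * ennreal (1 - p)"
    by (intro add_mono mult_right_mono Suc.IH) auto
  also have "\<dots> = ennreal (p * Bd c u m ((y - 1) / 2) (r - b) + (1 - p) * Bd c u m (2 * y) (r - b))"
  proof -
    have "ennreal (Bd c u m (G y 1) (r - b)) * ennreal p = ennreal (p * Bd c u m ((y - 1) / 2) (r - b))"
      using p by (subst ennreal_mult') (auto simp: mult.commute)
    moreover have "ennreal (Bd c u m (G y (-1)) (r - b)) * ennreal (1 - p) = ennreal ((1 - p) * Bd c u m (2 * y) (r - b))"
      using p by (subst ennreal_mult') (auto simp: mult.commute)
    moreover have "ennreal (p * Bd c u m ((y - 1) / 2) (r - b) + (1 - p) * Bd c u m (2 * y) (r - b))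
       = ennreal (p * Bd c u m ((y - 1) / 2) (r - b)) + ennreal ((1 - p) * Bd c u m (2 * y) (r - b))"
      using p Bd_nonneg by (intro ennreal_plus) auto
    ultimately show ?thesis by simp
  qed
  also have "\<dots> \<le> ennreal (Bd c u m y r)"
    using Bd_step[of y r] unfolding b_def by (intro ennreal_leI) simp
  finally show ?case unfolding A_def .
qed

end



lemma Bn_pos: "Bn \<omega> n > 0"
  by (induction n) auto

lemma Xn_Suc: "Xn x \<omega> (Suc n) = G (Xn x \<omega> n) (\<omega> (Suc n))"
proof -
  have B: "Bn \<omega> (Suc n) > 0" by (rule Bn_pos)
  have P: "2 powr \<omega> (Suc n) > 0" by simp
  show ?thesis unfolding Xn_def G_def using B P
    by (simp add: field_simps)
qed

lemma Xn_Z: "Xn x \<omega> n = Z (x - 2) (\<lambda>i. \<omega> (Suc i)) n"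
  by (induction n) (auto simp: Xn_Suc, simp add: Xn_def)

lemma Xn_case: "Xn x (case_nat s \<omega>) n = Z (x - 2) \<omega> n"
  by (simp add: Xn_Z)

lemma cnt_card: "cnt R y \<omega> k = real (card {j \<in> {..<k}. Z y \<omega> j < R})"
  unfolding cnt_def by (simp add: sum.inter_filter[symmetric])

lemma count_lemma:
  fixes P :: "nat \<Rightarrow> bool"
  assumes "real (card {j \<in> {1..k}. \<not> P j}) \<le> 3 * real k / 4"
  shows "real k / 4 - 1 \<le> real (card {j \<in> {..<k}. P j})"
proof -
  have part: "card {j \<in> {1..k}. \<not> P j} + card {j \<in> {1..k}. P j} = k"
  proof -
    have "card ({j \<in> {1..k}. \<not> P j} \<union> {j \<in> {1..k}. P j}) = card {j \<in> {1..k}. \<not> P j} + card {j \<in> {1..k}. P j}"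
      by (rule card_Un_disjoint) auto
    moreover have "{j \<in> {1..k}. \<not> P j} \<union> {j \<in> {1..k}. P j} = {1..k}" by auto
    ultimately show ?thesis by simp
  qed
  have "{j \<in> {1..k}. P j} \<subseteq> insert k {j \<in> {..<k}. P j}" by auto
  then have "card {j \<in> {1..k}. P j} \<le> card (insert k {j \<in> {..<k}. P j})"
    by (intro card_mono) auto
  also have "\<dots> \<le> Suc (card {j \<in> {..<k}. P j})" by (rule card_insert_le_m1) auto
  finally have "card {j \<in> {1..k}. P j} \<le> Suc (card {j \<in> {..<k}. P j})" .
  then have "real (card {j \<in> {1..k}. P j}) \<le> real (card {j \<in> {..<k}. P j}) + 1" by linarith
  moreover have "real (card {j \<in> {1..k}. \<not> P j}) + real (card {j \<in> {1..k}. P j}) = real k"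
    using part by (metis of_nat_add)
  ultimately show ?thesis using assms by linarith
qed

lemma shift_meas: "(\<lambda>\<omega> i. \<omega> (Suc i)) \<in> measurable (Omega p) (Omega p)"
  unfolding Omega_def
  by (rule measurable_PiM_single'[where f="\<lambda>i \<omega>. \<omega> (Suc i)"])
     (auto simp: space_PiM intro!: measurable_component_singleton)

context params
begin

lemma final:
  shows "measure (Omega p) {\<omega> \<in> space (Omega p). Xn x \<omega> k > 0 \<and> real (card {j \<in> {1..k}. Xn x \<omega> j \<ge> R}) \<le> 3 * real k / 4}
     \<le> 4 * exp (- real k / (16 * Vv c u m))"
proof -
  define E where "E = {\<omega> \<in> space (Omega p). Xn x \<omega> k > 0 \<and> real (card {j \<in> {1..k}. Xn x \<omega> j \<ge> R}) \<le> 3 * real k / 4}"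
  define E2 where "E2 = {\<omega>. 0 < Z (x - 2) (\<lambda>i. \<omega> (Suc i)) k \<and> real k / 4 - 1 \<le> cnt R (x - 2) (\<lambda>i. \<omega> (Suc i)) k}"
  define A where "A = {\<omega>. 0 < Z (x - 2) \<omega> k \<and> real k / 4 - 1 \<le> cnt R (x - 2) \<omega> k}"
  have sub: "E \<subseteq> E2"
  proof
    fix \<omega> assume "\<omega> \<in> E"
    then have a: "0 < Z (x - 2) (\<lambda>i. \<omega> (Suc i)) k"
      and b: "real (card {j \<in> {1..k}. \<not> Z (x - 2) (\<lambda>i. \<omega> (Suc i)) j < R}) \<le> 3 * real k / 4"
      unfolding E_def by (auto simp: Xn_Z not_less)
    show "\<omega> \<in> E2" unfolding E2_def using a count_lemma[OF b] by (simp add: cnt_card)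
  qed
  have m1: "(\<lambda>\<omega>. Z (x - 2) (\<lambda>i. \<omega> (Suc i)) k) \<in> borel_measurable (Omega p)"
    by (rule measurable_compose[OF shift_meas Z_meas])
  have m2: "(\<lambda>\<omega>. cnt R (x - 2) (\<lambda>i. \<omega> (Suc i)) k) \<in> borel_measurable (Omega p)"
    by (rule measurable_compose[OF shift_meas cnt_meas])
  have "Measurable.pred (Omega p) (\<lambda>\<omega>. 0 < Z (x - 2) (\<lambda>i. \<omega> (Suc i)) k \<and> real k / 4 - 1 \<le> cnt R (x - 2) (\<lambda>i. \<omega> (Suc i)) k)"
    using m1 m2 by measurable
  then have E2m: "E2 \<in> sets (Omega p)" unfolding E2_def pred_def by simp
  have "emeasure (Omega p) E2 = (\<integral>\<^sup>+ s. emeasure (Omega p) {\<omega>. case_nat s \<omega> \<in> E2} \<partial>(xi_dist p))"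
    by (rule iter[OF E2m])
  also have "\<dots> = (\<integral>\<^sup>+ s. emeasure (Omega p) A \<partial>(xi_dist p))"
    unfolding E2_def A_def by simp
  also have "\<dots> = emeasure (Omega p) A"
    using prob_space.emeasure_space_1[OF prob_xi, of p] by simp
  also have "\<dots> \<le> ennreal (Bd c u m (x - 2) (real k / 4 - 1))"
    unfolding A_def by (rule bound)
  finally have e2: "emeasure (Omega p) E2 \<le> ennreal (Bd c u m (x - 2) (real k / 4 - 1))" .
  have "emeasure (Omega p) E \<le> emeasure (Omega p) E2" by (rule emeasure_mono[OF sub E2m])
  with e2 have eE: "emeasure (Omega p) E \<le> ennreal (Bd c u m (x - 2) (real k / 4 - 1))" by simp
  have mE: "measure (Omega p) E \<le> Bd c u m (x - 2) (real k / 4 - 1)"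
    unfolding measure_def using eE Bd_nonneg by (simp add: enn2real_leI)
  define V where "V = Vv c u m"
  have V1': "V \<ge> 1" using V1 V_def by simp
  have "Bd c u m (x - 2) (real k / 4 - 1) \<le> 2 * exp (- (1 / (4 * V)) * (real k / 4 - 1))"
    unfolding Bd_def tt_def V_def[symmetric] using Phi_le2 by (intro mult_right_mono) auto
  also have "\<dots> = 2 * exp (1 / (4 * V)) * exp (- real k / (16 * V))"
  proof -
    have "- (1 / (4 * V)) * (real k / 4 - 1) = 1 / (4 * V) + (- real k / (16 * V))"
      using V1' by (simp add: field_simps)
    then show ?thesis by (simp only: exp_add mult.assoc)
  qed
  also have "\<dots> \<le> 2 * 2 * exp (- real k / (16 * V))"
  proof -
    have t0: "0 \<le> 1 / (4 * V)" "1 / (4 * V) \<le> 1/2" using V1' by (auto simp: divide_simps)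
    have "exp (1 / (4 * V)) \<le> 1 + 2 * (1 / (4 * V))" by (rule real_exp_bound_lemma[OF t0])
    also have "\<dots> \<le> 2" using t0 by simp
    finally show ?thesis by (intro mult_right_mono mult_left_mono) auto
  qed
  finally show ?thesis using mE unfolding E_def V_def by simp
qed

end



lemma ln2_ge_half: "ln (2::real) \<ge> 1/2"
proof -
  have "exp (1/2::real) \<le> 1 + 2 * (1/2)" by (rule real_exp_bound_lemma) auto
  then have "exp (1/2::real) \<le> 2" by simp
  then have "ln (exp (1/2::real)) \<le> ln 2" by (subst ln_le_cancel_iff) auto
  then show ?thesis by simp
qed

lemma ln2_le1: "ln (2::real) \<le> 1"
  using ln_2_less_1 by simp

abbreviation "EV p x k \<equiv> measure (Omega p) {\<omega> \<in> space (Omega p). Xn x \<omega> k > 0 \<and> real (Tk p x \<omega> k) \<le> 3 * real k / 4}"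

lemma EV_final:
  assumes "params p c u (Rconst p) m"
  shows "EV p x k \<le> 4 * exp (- real k / (16 * Vv c u m))"
  using params.final[OF assms, of x k] unfolding Tk_def by simp

lemma exp_le_powr2: "(a::real) \<le> z * ln 2 \<Longrightarrow> exp a \<le> 2 powr z"
  by (simp add: powr_def)

lemma caseA:
  assumes p: "0 < p" "p \<le> 1/5"
  shows "EV p x k \<le> 4 * 2 powr (- (1/4000) * p\<^sup>2 * real k)"
proof -
  have l2: "ln (2::real) \<ge> 1/2" by (rule ln2_ge_half)
  have "2 * p \<le> 2 * ((1 - 2 * p) * ln 2)"
  proof -
    have "(3/5) * (1/2) \<le> (1 - 2 * p) * ln 2" using p l2 by (intro mult_mono) auto
    then show ?thesis using p by linarith
  qed
  then have "2 * p / ((1 - 2 * p) * ln 2) \<le> 2" using p by (subst divide_le_eq) auto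
  then have R: "Rconst p + 1 \<le> 2 ^ 2" unfolding Rconst_def by simp
  have P: "params p (1/p) (2/p) (Rconst p) 2"
  proof
    show "1 \<le> 1 / p * (p * (2 / p) - (1 - p))" using p by (simp add: field_simps)
    show "1 \<le> 2 / p" using p by (simp add: field_simps)
  qed (use p R in auto)
  have V: "Vv (1/p) (2/p) 2 = 1/p * (2/p) + 1/p" unfolding Vv_def by (simp add: numeral_2_eq_2)
  have V3: "Vv (1/p) (2/p) 2 * p\<^sup>2 \<le> 3" unfolding V using p by (simp add: field_simps power2_eq_square)
  have Vpos: "Vv (1/p) (2/p) 2 > 0" unfolding V using p by (intro add_pos_pos mult_pos_pos) auto
  have "p\<^sup>2 / 48 \<le> 1 / (16 * Vv (1/p) (2/p) 2)" using V3 Vpos by (simp add: field_simps)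
  then have "real k * (p\<^sup>2 / 48) \<le> real k * (1 / (16 * Vv (1/p) (2/p) 2))" by (intro mult_left_mono) auto
  moreover have "(1/4000) * p\<^sup>2 * real k * ln 2 \<le> real k * (p\<^sup>2 / 48)"
  proof -
    have "(1/4000) * p\<^sup>2 * real k * ln 2 \<le> (1/4000) * p\<^sup>2 * real k * 1"
      using ln2_le1 by (intro mult_left_mono) auto
    moreover have "(1/4000) * p\<^sup>2 * real k * 1 = (p\<^sup>2 * real k) / 4000" by simp
    moreover have "real k * (p\<^sup>2 / 48) = (p\<^sup>2 * real k) / 48" by simp
    moreover have "0 \<le> p\<^sup>2 * real k" by simp
    ultimately show ?thesis by linarith
  qed
  moreover have "real k * (1 / (16 * Vv (1/p) (2/p) 2)) = real k / (16 * Vv (1/p) (2/p) 2)" by simp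
  moreover have "- real k / (16 * Vv (1/p) (2/p) 2) = - (real k / (16 * Vv (1/p) (2/p) 2))" by simp
  moreover have "- (1/4000) * p\<^sup>2 * real k * ln 2 = - ((1/4000) * p\<^sup>2 * real k * ln 2)" by simp
  ultimately have "- real k / (16 * Vv (1/p) (2/p) 2) \<le> - (1/4000) * p\<^sup>2 * real k * ln 2" by linarith
  then have "exp (- real k / (16 * Vv (1/p) (2/p) 2)) \<le> 2 powr (- (1/4000) * p\<^sup>2 * real k)"
    by (intro exp_le_powr2) simp
  then show ?thesis using EV_final[OF P, of x k] by simp
qed

lemma caseB:
  assumes p: "1/5 < p" "p \<le> 2/5"
  shows "EV p x k \<le> 4 * 2 powr (- (1/4000) * p\<^sup>2 * real k)"
proof -
  have l2: "ln (2::real) \<ge> 1/2" by (rule ln2_ge_half)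
  have "2 * p \<le> 8 * ((1 - 2 * p) * ln 2)"
  proof -
    have "(1/5) * (1/2) \<le> (1 - 2 * p) * ln 2" using p l2 by (intro mult_mono) auto
    then show ?thesis using p by linarith
  qed
  then have "2 * p / ((1 - 2 * p) * ln 2) \<le> 8" using p by (subst divide_le_eq) auto
  then have R: "Rconst p + 1 \<le> 2 ^ 4" unfolding Rconst_def by simp
  have P: "params p 5 5 (Rconst p) 4"
    by standard (use p R in auto)
  have V: "Vv 5 5 4 = 780" unfolding Vv_def by (simp add: eval_nat_numeral)
  have pp: "p\<^sup>2 \<le> 4/25"
  proof -
    have "p\<^sup>2 \<le> (2/5)\<^sup>2" using p by (intro power_mono) auto
    then show ?thesis by (simp add: power2_eq_square)
  qed
  have "(1/4000) * p\<^sup>2 * ln 2 \<le> (1/4000) * (4/25) * 1"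
    using pp ln2_le1 by (intro mult_mono) auto
  then have c: "(1/4000) * p\<^sup>2 * ln 2 \<le> 1 / (16 * 780)" by simp
  have "real k * ((1/4000) * p\<^sup>2 * ln 2) \<le> real k * (1 / (16 * 780))"
    using c by (intro mult_left_mono) auto
  then have "- real k / (16 * Vv 5 5 4) \<le> - (1/4000) * p\<^sup>2 * real k * ln 2"
    unfolding V by (simp add: algebra_simps)
  then have "exp (- real k / (16 * Vv 5 5 4)) \<le> 2 powr (- (1/4000) * p\<^sup>2 * real k)"
    by (intro exp_le_powr2) simp
  then show ?thesis using EV_final[OF P, of x k] by simp
qed

lemma hH_u2: "j \<le> m \<Longrightarrow> hH c 2 m j = c * (2 ^ m - 2 ^ (m - j))"
proof (induction j)
  case 0 then show ?case by simp
next
  case (Suc j)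
  then have "j < m" by simp
  then have "(2::real) ^ (m - j) = 2 * 2 ^ (m - Suc j)"
    by (metis Suc_diff_Suc power_Suc)
  then show ?case using Suc by (simp add: algebra_simps)
qed

lemma caseC:
  assumes p: "2/5 < p" "p < 1/2"
  shows "EV p x k \<le> 4 * 2 powr ((1/4000) * (1 - 2 * p) / log 2 (1 - 2 * p) * real k)"
proof -
  define d where "d = 1 - 2 * p"
  have d: "0 < d" "d < 1/5" using p unfolding d_def by auto
  define R where "R = Rconst p"
  define L where "L = log 2 (R + 1)"
  define m where "m = nat \<lceil>L\<rceil>"
  have l2: "ln (2::real) \<ge> 1/2" by (rule ln2_ge_half)
  have R2: "R \<ge> 2" unfolding R_def Rconst_def by simp
  have L0: "L > 0" unfolding L_def using R2 by simp
  have mL: "L \<le> real m" unfolding m_def using L0 by linarith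
  have mL2: "real m < L + 1" unfolding m_def using L0 by linarith
  have pw: "(2::real) ^ m = 2 powr (real m)" by (simp add: powr_realpow)
  have RL: "R + 1 = 2 powr L" unfolding L_def using R2 by simp
  have Rm: "R + 1 \<le> 2 ^ m" unfolding pw RL using mL by simp
  have Rm2: "(2::real) ^ m \<le> 2 * (R + 1)"
  proof -
    have "(2::real) powr (real m) \<le> 2 powr (L + 1)" using mL2 by simp
    also have "\<dots> = 2 * (R + 1)" unfolding RL by (simp add: powr_add)
    finally show ?thesis unfolding pw .
  qed
  have m1: "m \<ge> 1" using mL L0 by linarith
  have P: "params p 5 2 R m"
    by standard (use p Rm m1 in auto)
  have V: "Vv 5 2 m \<le> 5 * 2 ^ m" unfolding Vv_def using hH_u2[of m m 5] by simp
  have "2 * p / (d * ln 2) \<le> 2 / d"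
  proof -
    have "2 * p \<le> 2 / d * (d * ln 2)" using d l2 p by (simp add: field_simps)
    then show ?thesis using d by (subst divide_le_eq) auto
  qed
  then have "R \<le> 2 / d + 2" unfolding R_def Rconst_def d_def[symmetric] using d by auto
  moreover have "3 \<le> 3 / d" using d by (simp add: field_simps)
  ultimately have "R + 1 \<le> 5 / d" by (simp add: field_simps)
  then have V50: "Vv 5 2 m \<le> 50 / d" using V Rm2 by simp
  have Vpos: "Vv 5 2 m > 0" using params.V1[OF P] by simp
  have e1: "d / 800 \<le> 1 / (16 * Vv 5 2 m)"
    using V50 Vpos d by (simp add: field_simps)
  define q where "q = ln d"
  have q: "q \<le> - (4/5)" unfolding q_def using ln_le_minus_one[of d] d by simp
  have l2': "(ln 2)\<^sup>2 \<le> (1::real)" using ln2_le1 l2 by (simp add: power_le_one)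
  have eq: "(1/4000) * d / log 2 d * real k * ln 2 = - ((d * real k) * (ln 2)\<^sup>2 / (4000 * (- q)))"
    using q by (simp add: log_def q_def field_simps power2_eq_square)
  have "(d * real k) * (ln 2)\<^sup>2 / (4000 * (- q)) \<le> (d * real k) / 3200"
    using q l2' d by (intro frac_le) (auto intro: mult_left_le)
  moreover have "real k * (d / 800) \<le> real k * (1 / (16 * Vv 5 2 m))"
    using e1 by (intro mult_left_mono) auto
  moreover have "0 \<le> d * real k" using d by simp
  ultimately have "- real k / (16 * Vv 5 2 m) \<le> (1/4000) * d / log 2 d * real k * ln 2"
    unfolding eq by (simp add: field_simps)
  then have "exp (- real k / (16 * Vv 5 2 m)) \<le> 2 powr ((1/4000) * d / log 2 d * real k)"
    by (intro exp_le_powr2) simp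
  then show ?thesis using EV_final[OF P[unfolded R_def], of x k] unfolding d_def by simp
qed



lemma main_bound:
  assumes a: "0 < p" "p < 1/2"
  shows "EV p x k \<le> 4 * (2 powr (- (1/4000) * p\<^sup>2 * real k)
              + 2 powr ((1/4000) * (1 - 2 * p) / log 2 (1 - 2 * p) * real k))"
proof -
  define T1 where "T1 = 2 powr (- (1/4000) * p\<^sup>2 * real k)"
  define T2 where "T2 = 2 powr ((1/4000) * (1 - 2 * p) / log 2 (1 - 2 * p) * real k)"
  have T1: "T1 \<ge> 0" and T2: "T2 \<ge> 0" unfolding T1_def T2_def by auto
  have "EV p x k \<le> 4 * T1 \<or> EV p x k \<le> 4 * T2"
  proof (cases "p \<le> 1/5")
    case True then show ?thesis using caseA[of p x k] a unfolding T1_def by simp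
  next
    case False
    show ?thesis
    proof (cases "p \<le> 2/5")
      case True then show ?thesis using caseB[of p x k] False unfolding T1_def by simp
    next
      case False then show ?thesis using caseC[of p x k] a unfolding T2_def by simp
    qed
  qed
  then have "EV p x k \<le> 4 * (T1 + T2)" using T1 T2 by (auto simp: algebra_simps)
  then show ?thesis unfolding T1_def T2_def .
qed

theorem lemma3p3:
  shows "\<exists>C > 0. \<exists>\<beta> > 0. \<forall>(p::real) (x::real) (k::nat).
     0 < p \<and> p < 1/2 \<and> x > 2 \<and> k \<ge> 1 \<longrightarrow>
     measure (Omega p) {\<omega> \<in> space (Omega p). Xn x \<omega> k > 0 \<and> real (Tk p x \<omega> k) \<le> 3 * real k / 4}
       \<le> C * (2 powr (- \<beta> * p\<^sup>2 * real k)
              + 2 powr (\<beta> * (1 - 2 * p) / log 2 (1 - 2 * p) * real k))"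
proof -
  have "\<forall>(p::real) (x::real) (k::nat).
     0 < p \<and> p < 1/2 \<and> x > 2 \<and> k \<ge> 1 \<longrightarrow>
     measure (Omega p) {\<omega> \<in> space (Omega p). Xn x \<omega> k > 0 \<and> real (Tk p x \<omega> k) \<le> 3 * real k / 4}
       \<le> (4::real) * (2 powr (- (1/4000::real) * p\<^sup>2 * real k)
              + 2 powr ((1/4000::real) * (1 - 2 * p) / log 2 (1 - 2 * p) * real k))"
    using main_bound by blast
  moreover have "(4::real) > 0" "(1/4000::real) > 0" by auto
  ultimately show ?thesis by blast
qed

end
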